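(* Let $A\in\mathbb{R}^{m\times n}$, $E\in\mathbb{R}^{m\times m}$, $F\in\mathbb{R}^{n\times n}$ with $I_m+E$ and $I_n+F$ nonsingular, and let $b,\epsilon\in\mathbb{R}^m$. Set $\tilde A = (I_m+E)A(I_n+F) = A+\Delta A$ with $\Delta A = EA + AF + EAF$, and $\tilde b = b+\epsilon$. Assume the noiseless system $Ax=b$ is consistent and let $x_{\rm LS}=A^\dagger b$. Let $(x_k)_{k\ge0}$ be the iterates of the randomized Kaczmarz algorithm applied to $\tilde A x\approx\tilde b$, with starting point $x_0$ satisfying $x_0 - x_{\rm LS}\in\operatorname{range}(\tilde A^\top)$. Then for every $k\ge0$, $$\mathbb{E}\|x_k - x_{\rm LS}\|^2 \le \left(1-\frac{1}{\tilde R}\right)^k\|x_0 - x_{\rm LS}\|^2 + \frac{\|\Delta A\, x_{\rm LS} - \epsilon\|^2}{\sigma_{\min}^2(\tilde A)},$$ where $\tilde R = \|\tilde A^\dagger\|^2\,\|\tilde A\|_F^2$.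
   Context: Norms of vectors are Euclidean; $\|M\|$ is the spectral norm, $\|M\|_F$ the Frobenius norm, $M^\dagger$ the Moore–Penrose pseudoinverse, $\sigma_{\min}(M)$ the smallest nonzero singular value of $M$, and $I_m$ the $m\times m$ identity. The randomized Kaczmarz (RK) algorithm applied to a system $\tilde A x\approx \tilde b$ (with $\tilde A$ having nonzero rows $\tilde a_1^\top,\dots,\tilde a_m^\top$) generates, from a starting point $x_0$, the iterates $x_{k+1} = x_k - \frac{\tilde a_{i(k)}^\top x_k - \tilde b_{i(k)}}{\|\tilde a_{i(k)}\|^2}\tilde a_{i(k)}$, where the indices $i(k)$ are drawn independently with $\Pr[i(k)=i] = \|\tilde a_i\|^2/\|\tilde A\|_F^2$. The expectation is over these random indices. *)

theory Defs
  imports "HOL-Analysis.Analysis" "HOL-Probability.Probability"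
begin

definition pinv :: "real^'n^'m \<Rightarrow> real^'m^'n" where
  "pinv A = (THE X. A ** X ** A = A \<and> X ** A ** X = X \<and>
                    transpose (A ** X) = A ** X \<and> transpose (X ** A) = X ** A)"

definition spec_norm :: "real^'n^'m \<Rightarrow> real" where
  "spec_norm A = onorm (\<lambda>x. A *v x)"

definition frob_norm :: "real^'n^'m \<Rightarrow> real" where
  "frob_norm A = sqrt (\<Sum>i\<in>UNIV. \<Sum>j\<in>UNIV. (A $ i $ j)^2)"

definition sigma_min :: "real^'n^'m \<Rightarrow> real" where
  "sigma_min A = sqrt (Min {l. l \<noteq> 0 \<and>
      (\<exists>v. v \<noteq> 0 \<and> (transpose A ** A) *v v = l *s v)})"

definition row_pmf :: "real^'n^'m \<Rightarrow> 'm pmf" where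
  "row_pmf A = embed_pmf (\<lambda>i. (norm (row i A))^2 / (frob_norm A)^2)"

definition rk_step :: "real^'n^'m \<Rightarrow> real^'m \<Rightarrow> real^'n \<Rightarrow> 'm \<Rightarrow> real^'n" where
  "rk_step A b x i = x - ((row i A \<bullet> x - b $ i) / (norm (row i A))^2) *\<^sub>R row i A"

primrec rk_iter :: "real^'n^'m \<Rightarrow> real^'m \<Rightarrow> real^'n \<Rightarrow> nat \<Rightarrow> (real^'n) pmf" where
  "rk_iter A b x0 0 = return_pmf x0"
| "rk_iter A b x0 (Suc k) =
     bind_pmf (rk_iter A b x0 k) (\<lambda>x. map_pmf (rk_step A b x) (row_pmf A))"

end

theory Submission
  imports Defs
begin

lemma norm_add_scale: "norm (x + t *\<^sub>R y)^2 = x \<bullet> x + 2*t*(x \<bullet> y) + t^2*(y \<bullet> y)"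
  for x y :: "'a::real_inner"
  unfolding power2_norm_eq_inner
  by (simp add: inner_add_left inner_add_right inner_commute algebra_simps power2_eq_square)
lemma norm_sub_scale: "norm (e - c *\<^sub>R a)^2 = e \<bullet> e - 2*c*(a \<bullet> e) + c^2*(a \<bullet> a)"
  for e a :: "'a::real_inner"
  unfolding power2_norm_eq_inner
  by (simp add: inner_diff_left inner_diff_right inner_commute algebra_simps power2_eq_square)
lemma alg4: "(\<mu>::real)*(1 + 2*t*c + t^2*a) \<le> \<mu> + 2*t*(a + \<mu>*c) + t^2*N \<Longrightarrow> 0 \<le> 2*t*a + t^2*(N - \<mu>*a)"
  by (simp add: algebra_simps)

lemma alg1: "(s::real) \<noteq> 0 \<Longrightarrow> E - 2 * ((p - r) / s) * p + ((p - r)/s)^2 * s = E + (r^2 - p^2) / s"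
  by (simp add: field_simps power2_eq_square)
lemma alg2: assumes "0 \<le> (q::real)" "t = -a/(q+1)" shows "(2*t*a + t^2*q)*(q+1)^2 = a^2*(-q-2)"
proof -
  have "t*(q+1) = -a" using assms by simp
  have "(2*t*a + t^2*q)*(q+1)^2 = 2*a*(t*(q+1))*(q+1) + q*(t*(q+1))^2"
    by (simp add: algebra_simps power2_eq_square)
  also have "\<dots> = 2*a*(-a)*(q+1) + q*(-a)^2" by (simp only: \<open>t*(q+1) = -a\<close>)
  also have "\<dots> = a^2*(-q-2)" by (simp add: algebra_simps power2_eq_square)
  finally show ?thesis .
qed

lemma mv_inner_transpose: "(A *v x) \<bullet> y = x \<bullet> (transpose A *v (y::real^'m))"
  by (metis dot_lmul_matrix inner_commute transpose_transpose vector_transpose_matrix)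

definition rowsp :: "real^'n^'m \<Rightarrow> (real^'n) set" where
  "rowsp A = range (\<lambda>y. transpose A *v y)"

lemma subspace_rowsp: "subspace (rowsp A)"
  unfolding rowsp_def by (rule linear_subspace_image[OF matrix_vector_mul_linear subspace_UNIV])

lemma rowsp_null: assumes "u \<in> rowsp A" "A *v u = 0" shows "u = 0"
proof -
  obtain y where u: "u = transpose A *v y" using assms(1) unfolding rowsp_def by auto
  have "u \<bullet> u = y \<bullet> (A *v u)"
    by (metis u inner_commute mv_inner_transpose transpose_transpose)
  then show ?thesis using assms(2) by simp
qed

lemma perp_rowsp_null: fixes A :: "real^'n^'m" assumes "\<And>y. x \<bullet> (transpose A *v y) = 0" shows "A *v x = 0"
proof -
  have "(A *v x) \<bullet> (A *v x) = x \<bullet> (transpose A *v (A *v x))" by (rule mv_inner_transpose)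
  then have "(A *v x) \<bullet> (A *v x) = 0" using assms[of "A *v x"] by simp
  then show ?thesis by simp
qed

lemma onb_exists:
  fixes U :: "(real^'k) set"
  assumes "subspace U"
  obtains B where "finite B" "B \<subseteq> U" "span B = U" "\<And>b c. b \<in> B \<Longrightarrow> c \<in> B \<Longrightarrow> b \<bullet> c = (if b = c then 1 else 0)"
proof -
  obtain B where B: "B \<subseteq> U" "pairwise orthogonal B" "\<And>x. x \<in> B \<Longrightarrow> norm x = 1"
              "independent B" "span B = U"
    using orthonormal_basis_subspace[OF assms] by metis
  have "b \<bullet> c = (if b = c then 1 else 0)" if "b \<in> B" "c \<in> B" for b c
  proof (cases "b = c")
    case True then show ?thesis using B(3)[OF that(1)] by (simp add: norm_eq_1)
  next
    case False then show ?thesis using B(2) that by (auto simp: pairwise_def orthogonal_def)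
  qed
  then show ?thesis using that B independent_imp_finite by metis
qed

definition genm :: "(real^'m) set \<Rightarrow> (real^'m \<Rightarrow> real^'n) \<Rightarrow> real^'m^'n" where
  "genm B f = (\<chi> i j. \<Sum>w\<in>B. f w $ i * w $ j)"

lemma genm_mult: "genm B f *v y = (\<Sum>w\<in>B. (w \<bullet> y) *\<^sub>R f w)"
  by (simp add: vec_eq_iff genm_def matrix_vector_mult_def inner_vec_def sum_component
      sum_distrib_left sum_distrib_right sum.swap[of _ UNIV B] mult_ac)

lemma genm_transpose: "transpose (genm B (\<lambda>x. x)) = genm B (\<lambda>x. x)"
  by (simp add: vec_eq_iff genm_def transpose_def mult.commute)

locale onb =
  fixes B :: "(real^'k) set"
  assumes fin: "finite B" and on: "\<And>b c. b \<in> B \<Longrightarrow> c \<in> B \<Longrightarrow> b \<bullet> c = (if b = c then 1 else 0)"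
begin

abbreviation "P \<equiv> genm B (\<lambda>x. x)"

lemma P_span: "P *v x \<in> span B"
  unfolding genm_mult by (intro span_sum span_mul span_base) 

lemma P_inner: assumes "c \<in> B" shows "c \<bullet> (P *v x) = c \<bullet> x"
proof -
  have "c \<bullet> (P *v x) = (\<Sum>w\<in>B. (w \<bullet> x) * (c \<bullet> w))"
    by (simp add: genm_mult inner_sum_right)
  also have "\<dots> = (\<Sum>w\<in>B. if w = c then c \<bullet> x else 0)"
    by (intro sum.cong refl) (use assms on in auto)
  also have "\<dots> = c \<bullet> x" using assms fin by simp
  finally show ?thesis .
qed

lemma P_perp: assumes "u \<in> span B" shows "u \<bullet> (x - P *v x) = 0"
proof -
  have "orthogonal (x - P *v x) u"
  proof (rule orthogonal_to_span[OF assms])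
    fix y assume "y \<in> B"
    then have "y \<bullet> (x - P *v x) = 0" by (simp add: inner_diff_right P_inner)
    then show "orthogonal (x - P *v x) y" by (simp add: orthogonal_def inner_commute)
  qed
  then show ?thesis by (simp add: orthogonal_def inner_commute)
qed

lemma P_fix: assumes "u \<in> span B" shows "P *v u = u"
proof -
  have "u - P *v u \<in> span B" using assms P_span by (simp add: span_diff)
  then have "(u - P *v u) \<bullet> (u - P *v u) = 0" using P_perp by simp
  then show ?thesis by simp
qed

end

definition penrose :: "real^'n^'m \<Rightarrow> real^'m^'n \<Rightarrow> bool" where
  "penrose A X \<longleftrightarrow> A ** X ** A = A \<and> X ** A ** X = X \<and>
                    transpose (A ** X) = A ** X \<and> transpose (X ** A) = X ** A"

lemma penrose_unique:
  assumes "penrose A X" "penrose A Y" shows "X = Y"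
proof -
  have x1: "A ** X ** A = A" and x2: "X ** A ** X = X" and x3: "transpose (A ** X) = A ** X"
    and x4: "transpose (X ** A) = X ** A" using assms(1) unfolding penrose_def by auto
  have y1: "A ** Y ** A = A" and y2: "Y ** A ** Y = Y" and y3: "transpose (A ** Y) = A ** Y"
    and y4: "transpose (Y ** A) = Y ** A" using assms(2) unfolding penrose_def by auto
  have tA1: "transpose A = transpose A ** A ** Y"
  proof -
    have "transpose A = transpose (A ** Y ** A)" using y1 by simp
    also have "\<dots> = transpose A ** transpose (A ** Y)" by (simp add: matrix_transpose_mul)
    also have "\<dots> = transpose A ** A ** Y" using y3 by (simp add: matrix_mul_assoc)
    finally show ?thesis .
  qed
  have tA2: "transpose A = X ** A ** transpose A"
  proof -
    have "transpose A = transpose (A ** (X ** A))" using x1 by (simp add: matrix_mul_assoc)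
    also have "\<dots> = transpose (X ** A) ** transpose A" by (simp add: matrix_transpose_mul)
    also have "\<dots> = X ** A ** transpose A" using x4 by simp
    finally show ?thesis .
  qed
  have "X = X ** (A ** X)" using x2 by (simp add: matrix_mul_assoc)
  also have "\<dots> = X ** transpose (A ** X)" using x3 by simp
  also have "\<dots> = X ** transpose X ** transpose A" by (simp add: matrix_transpose_mul matrix_mul_assoc)
  also have "\<dots> = X ** transpose X ** (transpose A ** A ** Y)" using tA1 by simp
  also have "\<dots> = X ** (transpose X ** transpose A) ** A ** Y" by (simp add: matrix_mul_assoc)
  also have "\<dots> = X ** (A ** X) ** A ** Y" using x3 by (simp add: matrix_transpose_mul)
  also have "\<dots> = (X ** A ** X) ** A ** Y" by (simp add: matrix_mul_assoc)
  also have "\<dots> = X ** A ** Y" using x2 by simp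
  finally have X: "X = X ** A ** Y" .
  have "Y = (Y ** A) ** Y" using y2 by simp
  also have "\<dots> = transpose (Y ** A) ** Y" using y4 by simp
  also have "\<dots> = transpose A ** transpose Y ** Y" by (simp add: matrix_transpose_mul)
  also have "\<dots> = (X ** A ** transpose A) ** transpose Y ** Y" using tA2 by simp
  also have "\<dots> = X ** A ** (transpose A ** transpose Y) ** Y" by (simp add: matrix_mul_assoc)
  also have "\<dots> = X ** A ** (Y ** A) ** Y" using y4 by (simp add: matrix_transpose_mul)
  also have "\<dots> = X ** A ** (Y ** A ** Y)" by (simp add: matrix_mul_assoc)
  also have "\<dots> = X ** A ** Y" using y2 by simp
  finally show ?thesis using X by simp
qed

lemma rowsp_proj:
  fixes A :: "real^'n^'m"
  assumes "onb BV" "span BV = rowsp A"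
  shows "A *v (genm BV (\<lambda>x. x) *v z) = A *v z"
proof -
  interpret onb BV by fact
  have "A *v (z - P *v z) = 0"
  proof (rule perp_rowsp_null)
    fix y
    have "transpose A *v y \<in> span BV" using assms(2) by (simp add: rowsp_def)
    from P_perp[OF this, of z] show "(z - P *v z) \<bullet> (transpose A *v y) = 0"
      by (simp add: inner_commute)
  qed
  then show ?thesis by (simp add: vec.diff)
qed

lemma penrose_exists:
  fixes A :: "real^'n^'m"
  shows "\<exists>X. penrose A X"
proof -
  obtain BV where BV: "finite BV" "BV \<subseteq> rowsp A" "span BV = rowsp A"
     "\<And>b c. b \<in> BV \<Longrightarrow> c \<in> BV \<Longrightarrow> b \<bullet> c = (if b = c then 1 else 0)"
    using onb_exists[OF subspace_rowsp] by metis
  have sW: "subspace (range (\<lambda>x. A *v x))"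
    by (rule linear_subspace_image[OF matrix_vector_mul_linear subspace_UNIV])
  obtain BW where BW: "finite BW" "BW \<subseteq> range (\<lambda>x. A *v x)" "span BW = range (\<lambda>x. A *v x)"
     "\<And>b c. b \<in> BW \<Longrightarrow> c \<in> BW \<Longrightarrow> b \<bullet> c = (if b = c then 1 else 0)"
    using onb_exists[OF sW] by metis
  interpret V: onb BV using BV by unfold_locales auto
  interpret W: onb BW using BW by unfold_locales auto
  have V: "onb BV" by unfold_locales
  have "\<forall>w\<in>BW. \<exists>p. p \<in> rowsp A \<and> A *v p = w"
  proof
    fix w assume "w \<in> BW"
    then obtain z where z: "w = A *v z" using BW(2) by auto
    show "\<exists>p. p \<in> rowsp A \<and> A *v p = w"
      using V.P_span[of z] BV(3) rowsp_proj[OF V BV(3), of z] z by auto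
  qed
  then obtain pre where pre: "\<And>w. w \<in> BW \<Longrightarrow> pre w \<in> rowsp A \<and> A *v pre w = w" by metis
  define X where "X = genm BW pre"
  have AX: "A *v (X *v y) = W.P *v y" for y
    using pre by (simp add: X_def genm_mult vec.sum matrix_vector_mult_scaleR)
  have XV: "X *v y \<in> rowsp A" for y
    unfolding X_def genm_mult
    by (intro subspace_sum[OF subspace_rowsp] subspace_scale[OF subspace_rowsp]) (use pre in auto)
  have XA: "X *v (A *v z) = V.P *v z" for z
  proof -
    have d1: "X *v (A *v z) - V.P *v z \<in> rowsp A"
      using XV V.P_span BV(3) subspace_diff[OF subspace_rowsp] by metis
    have "A *v (X *v (A *v z)) = A *v z" unfolding AX using BW(3) W.P_fix by auto
    then have "A *v (X *v (A *v z) - V.P *v z) = 0"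
      using rowsp_proj[OF V BV(3), of z] by (simp add: vec.diff)
    then show ?thesis using rowsp_null[OF d1] by simp
  qed
  have "A ** X ** A = A"
    unfolding matrix_eq by (simp add: matrix_vector_mul_assoc[symmetric] XA rowsp_proj[OF V BV(3)])
  moreover have "X ** A ** X = X"
    unfolding matrix_eq using XV BV(3) V.P_fix by (simp add: matrix_vector_mul_assoc[symmetric] XA)
  moreover have "A ** X = W.P"
    unfolding matrix_eq by (simp add: matrix_vector_mul_assoc[symmetric] AX)
  moreover have "X ** A = V.P"
    unfolding matrix_eq by (simp add: matrix_vector_mul_assoc[symmetric] XA)
  ultimately have "penrose A X" unfolding penrose_def by (simp add: genm_transpose)
  then show ?thesis by blast
qed

lemma pinv_penrose: "penrose A (pinv A)"
proof -
  have "\<exists>!X. penrose A X" using penrose_exists penrose_unique by metis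
  then show ?thesis unfolding pinv_def penrose_def[symmetric] by (rule theI')
qed

lemma pinv_consistent: "A *v (pinv A *v (A *v x)) = A *v x"
proof -
  have "A ** pinv A ** A = A" using pinv_penrose[of A] by (simp add: penrose_def)
  then show ?thesis by (metis matrix_vector_mul_assoc)
qed

lemma pinv_rowsp: fixes A :: "real^'n^'m" assumes "u \<in> rowsp A" shows "pinv A *v (A *v u) = u"
proof -
  obtain y where u: "u = transpose A *v y" using assms unfolding rowsp_def by auto
  let ?X = "pinv A"
  have p: "A ** ?X ** A = A" "transpose (?X ** A) = ?X ** A" using pinv_penrose[of A] by (auto simp: penrose_def)
  have "?X ** A ** transpose A = transpose (?X ** A) ** transpose A" using p by simp
  also have "\<dots> = transpose (A ** (?X ** A))" by (simp add: matrix_transpose_mul)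
  also have "\<dots> = transpose A" using p by (simp add: matrix_mul_assoc)
  finally have "?X ** A ** transpose A = transpose A" .
  then show ?thesis using u by (metis matrix_vector_mul_assoc)
qed

lemma row_eq: "row i M = M $ i"
  by (simp add: row_def vec_eq_iff)

lemma rowsp_nonzero:
  fixes M :: "real^'n^'m" assumes "M \<noteq> 0" obtains v where "v \<in> rowsp M" "v \<noteq> 0"
proof -
  have "\<exists>y. transpose M *v y \<noteq> 0"
  proof (rule ccontr)
    assume "\<not> ?thesis"
    then have "transpose M = 0" by (simp add: matrix_eq)
    moreover have "transpose (0::real^'m^'n) = 0" by (simp add: transpose_def vec_eq_iff)
    ultimately have "M = 0" by (metis transpose_transpose)
    with assms show False by simp
  qed
  then show ?thesis using that unfolding rowsp_def by auto
qed

lemma spectral_min: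
  fixes M :: "real^'n^'m" assumes "M \<noteq> 0"
  obtains e \<mu> where "e \<in> rowsp M" "norm e = 1" "\<mu> = norm (M *v e)^2" "0 < \<mu>"
    "\<And>v. v \<in> rowsp M \<Longrightarrow> \<mu> * norm v ^2 \<le> norm (M *v v)^2"
    "transpose M *v (M *v e) = \<mu> *\<^sub>R e"
proof -
  let ?K = "sphere 0 1 \<inter> rowsp M"
  have cK: "compact ?K"
    by (intro compact_Int_closed compact_sphere closed_subspace subspace_rowsp)
  obtain v0 where v0: "v0 \<in> rowsp M" "v0 \<noteq> 0" using rowsp_nonzero[OF assms] by metis
  have "v0 /\<^sub>R norm v0 \<in> ?K" using v0 subspace_scale[OF subspace_rowsp] by auto
  then have neK: "?K \<noteq> {}" by blast
  have cont: "continuous_on ?K (\<lambda>v. norm (M *v v)^2)"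
    by (intro continuous_intros linear_continuous_on[OF matrix_vector_mul_bounded_linear])
  obtain e where e: "e \<in> ?K" "\<And>y. y \<in> ?K \<Longrightarrow> norm (M *v e)^2 \<le> norm (M *v y)^2"
    using continuous_attains_inf[OF cK neK cont] by blast
  define \<mu> where "\<mu> = norm (M *v e)^2"
  have eV: "e \<in> rowsp M" and ne: "norm e = 1" using e(1) by auto
  have "M *v e \<noteq> 0"
  proof
    assume "M *v e = 0"
    then have "e = 0" using rowsp_null[OF eV] by simp
    with ne show False by simp
  qed
  then have mupos: "0 < \<mu>" unfolding \<mu>_def by simp
  have ineq: "\<mu> * norm v ^2 \<le> norm (M *v v)^2" if v: "v \<in> rowsp M" for v
  proof (cases "v = 0")
    case True then show ?thesis by simp
  next
    case False
    let ?u = "v /\<^sub>R norm v"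
    have "?u \<in> ?K" using v False subspace_scale[OF subspace_rowsp] by auto
    then have "\<mu> \<le> norm (M *v ?u)^2" using e(2) unfolding \<mu>_def by blast
    also have "\<dots> = norm (M *v v)^2 / norm v^2"
      by (simp add: matrix_vector_mult_scaleR power_divide power_mult_distrib divide_inverse power_inverse)
    finally show ?thesis using False by (simp add: field_simps)
  qed
  define w where "w = transpose M *v (M *v e) - \<mu> *\<^sub>R e"
  have wV: "w \<in> rowsp M" unfolding w_def
    by (intro subspace_diff[OF subspace_rowsp] subspace_scale[OF subspace_rowsp] eV)
       (auto simp: rowsp_def)
  have "w = 0"
  proof (rule ccontr)
    assume wnz: "w \<noteq> 0"
    define a where "a = w \<bullet> w"
    define q where "q = norm (M *v w)^2 - \<mu> * norm w ^2"
    define c where "c = e \<bullet> w"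
    define m where "m = (M *v e) \<bullet> (M *v w)"
    have apos: "0 < a" using wnz unfolding a_def by simp
    have q0: "0 \<le> q" using ineq[OF wV] unfolding q_def by simp
    define t where "t = - a / (q + 1)"
    define v where "v = e + t *\<^sub>R w"
    have vV: "v \<in> rowsp M" unfolding v_def
      by (intro subspace_add[OF subspace_rowsp] subspace_scale[OF subspace_rowsp] eV wV)
    have m_eq: "m = a + \<mu> * c"
    proof -
      have "m = (M *v w) \<bullet> (M *v e)" unfolding m_def by (rule inner_commute)
      also have "\<dots> = w \<bullet> (transpose M *v (M *v e))" by (rule mv_inner_transpose)
      also have "\<dots> = w \<bullet> (w + \<mu> *\<^sub>R e)" unfolding w_def by simp
      finally show ?thesis unfolding a_def c_def by (simp add: inner_add_right inner_commute)
    qed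
    have n1: "norm (M *v v)^2 = \<mu> + 2*t*m + t^2 * norm (M *v w)^2"
      unfolding v_def \<mu>_def m_def matrix_vector_right_distrib matrix_vector_mult_scaleR norm_add_scale
      by (simp add: power2_norm_eq_inner)
    have n2: "norm v ^2 = 1 + 2*t*c + t^2 * a"
      using ne unfolding v_def c_def a_def norm_add_scale by (simp add: norm_eq_1)
    have "\<mu> * (1 + 2*t*c + t^2 * a) \<le> \<mu> + 2*t*(a + \<mu>*c) + t^2 * norm (M *v w)^2"
      using ineq[OF vV] unfolding n1 n2 m_eq .
    then have key0: "0 \<le> 2*t*a + t^2*(norm (M *v w)^2 - \<mu> * a)" by (rule alg4)
    have "norm w ^2 = a" unfolding a_def by (simp add: power2_norm_eq_inner)
    then have key: "0 \<le> 2*t*a + t^2*q" using key0 unfolding q_def by simp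
    have "(2*t*a + t^2*q) * (q+1)^2 = a^2 * (- q - 2)"
      by (rule alg2[OF q0 t_def])
    moreover have "a^2 * (- q - 2) < 0" using apos q0 by (simp add: mult_pos_neg)
    moreover have "0 \<le> (2*t*a + t^2*q) * (q+1)^2" using key by simp
    ultimately show False by linarith
  qed
  then have "transpose M *v (M *v e) = \<mu> *\<^sub>R e" unfolding w_def by simp
  then show ?thesis using eV ne \<mu>_def mupos ineq by (intro that) auto
qed

lemma eig_finite:
  fixes S :: "real^'n^'n"
  assumes sym: "\<And>x y. (S *v x) \<bullet> y = x \<bullet> (S *v y)"
  shows "finite {l. \<exists>v. v \<noteq> 0 \<and> S *v v = l *s v}" (is "finite ?L")
proof -
  define ev where "ev l = (SOME v. v \<noteq> 0 \<and> S *v v = l *s v)" for l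
  have ev: "ev l \<noteq> 0 \<and> S *v ev l = l *\<^sub>R ev l" if "l \<in> ?L" for l
  proof -
    have "\<exists>v. v \<noteq> 0 \<and> S *v v = l *s v" using that by simp
    then have "ev l \<noteq> 0 \<and> S *v ev l = l *s ev l" unfolding ev_def by (rule someI_ex)
    then show ?thesis by (simp add: scalar_mult_eq_scaleR)
  qed
  have orth: "ev l1 \<bullet> ev l2 = 0" if "l1 \<in> ?L" "l2 \<in> ?L" "l1 \<noteq> l2" for l1 l2
  proof -
    have "l1 * (ev l1 \<bullet> ev l2) = (S *v ev l1) \<bullet> ev l2" using ev[OF that(1)] by simp
    also have "\<dots> = ev l1 \<bullet> (S *v ev l2)" by (rule sym)
    also have "\<dots> = l2 * (ev l1 \<bullet> ev l2)" using ev[OF that(2)] by simp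
    finally show ?thesis using that(3) by simp
  qed
  have inj: "inj_on ev ?L"
  proof (rule inj_onI)
    fix l1 l2 assume h: "l1 \<in> ?L" "l2 \<in> ?L" "ev l1 = ev l2"
    have e1: "S *v ev l1 = l1 *\<^sub>R ev l1" using ev[OF h(1)] by (rule conjunct2)
    have e2: "S *v ev l2 = l2 *\<^sub>R ev l2" using ev[OF h(2)] by (rule conjunct2)
    have "l1 *\<^sub>R ev l1 = S *v ev l1" by (rule e1[symmetric])
    also have "\<dots> = S *v ev l2" by (simp only: h(3))
    also have "\<dots> = l2 *\<^sub>R ev l2" by (rule e2)
    also have "\<dots> = l2 *\<^sub>R ev l1" by (simp only: h(3))
    finally have "l1 *\<^sub>R ev l1 = l2 *\<^sub>R ev l1" .
    then show "l1 = l2" using ev[OF h(1)] by (simp add: scaleR_cancel_right)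
  qed
  have "pairwise orthogonal (ev ` ?L)"
  proof (unfold pairwise_def, intro ballI impI)
    fix x y assume h: "x \<in> ev ` ?L" "y \<in> ev ` ?L" "x \<noteq> y"
    then obtain l1 l2 where l: "l1 \<in> ?L" "l2 \<in> ?L" "x = ev l1" "y = ev l2" by blast
    then have "l1 \<noteq> l2" using h(3) by blast
    then show "orthogonal x y" using orth[OF l(1,2)] l(3,4) by (simp add: orthogonal_def)
  qed
  moreover have "0 \<notin> ev ` ?L"
  proof
    assume "0 \<in> ev ` ?L"
    then obtain l where l: "l \<in> ?L" "0 = ev l" by blast
    then show False using ev[OF l(1)] by simp
  qed
  ultimately have "independent (ev ` ?L)" by (rule pairwise_orthogonal_independent)
  then have "finite (ev ` ?L)" by (rule independent_imp_finite)
  then show ?thesis using inj finite_imageD by blast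
qed

lemma vnorm2: "norm (v::real^'m)^2 = (\<Sum>i\<in>UNIV. (v$i)^2)"
  unfolding power2_norm_eq_inner inner_vec_def by (simp add: power2_eq_square)

lemma mv_comp: "(M *v x) $ i = row i M \<bullet> x"
  by (simp add: matrix_vector_mul_component row_eq)

lemma frob2: "(frob_norm M)^2 = (\<Sum>i\<in>UNIV. norm (row i M)^2)"
proof -
  have "(frob_norm M)^2 = (\<Sum>i\<in>UNIV. \<Sum>j\<in>UNIV. (M $ i $ j)^2)"
    unfolding frob_norm_def by (simp add: sum_nonneg)
  also have "\<dots> = (\<Sum>i\<in>UNIV. norm (row i M)^2)"
    by (simp add: vnorm2 row_def)
  finally show ?thesis .
qed

lemma mv_norm_le: "norm (M *v x)^2 \<le> (frob_norm M)^2 * norm (x::real^'n)^2"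
proof -
  have "norm (M *v x)^2 = (\<Sum>i\<in>UNIV. (row i M \<bullet> x)^2)" by (simp add: vnorm2 mv_comp)
  also have "\<dots> \<le> (\<Sum>i\<in>UNIV. norm (row i M)^2 * norm x^2)"
  proof (rule sum_mono)
    fix i
    have "\<bar>row i M \<bullet> x\<bar> \<le> norm (row i M) * norm x" by (rule Cauchy_Schwarz_ineq2)
    then have "\<bar>row i M \<bullet> x\<bar>^2 \<le> (norm (row i M) * norm x)^2" by (rule power_mono) simp
    then show "(row i M \<bullet> x)^2 \<le> norm (row i M)^2 * norm x^2" by (simp add: power_mult_distrib)
  qed
  also have "\<dots> = (frob_norm M)^2 * norm x^2" by (simp add: frob2 sum_distrib_right)
  finally show ?thesis .
qed

lemma frob_pos: fixes M :: "real^'n^'m" assumes "\<And>i. row i M \<noteq> 0" shows "0 < (frob_norm M)^2"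
proof -
  define i :: 'm where "i = undefined"
  have "0 < norm (row i M)^2" using assms by simp
  also have "\<dots> \<le> (\<Sum>i\<in>UNIV. norm (row i M)^2)"
    by (rule member_le_sum) auto
  finally show ?thesis by (simp add: frob2)
qed

lemma pmf_row: assumes "\<And>i. row i M \<noteq> 0"
  shows "pmf (row_pmf M) i = norm (row i M)^2 / (frob_norm M)^2"
  unfolding row_pmf_def
proof (rule pmf_embed_pmf)
  show "0 \<le> norm (row i M)^2 / (frob_norm M)^2" for i by simp
  have "(\<Sum>i\<in>UNIV. norm (row i M)^2 / (frob_norm M)^2) = 1"
    using frob_pos[OF assms] by (simp add: sum_divide_distrib[symmetric] frob2)
  then show "(\<integral>\<^sup>+ i. ennreal (norm (row i M)^2 / (frob_norm M)^2) \<partial>count_space UNIV) = 1"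
    by (simp add: nn_integral_count_space_finite sum_ennreal)
qed

lemma sum_alg: "(\<Sum>i\<in>A. s i * E / F + ((r i)^2 - (p i)^2) / (F::real)) = (\<Sum>i\<in>A. s i) * E / F + ((\<Sum>i\<in>A. (r i)^2) - (\<Sum>i\<in>A. (p i)^2)) / F"
proof -
  have "(\<Sum>i\<in>A. s i * E / F + ((r i)^2 - (p i)^2) / F) = (\<Sum>i\<in>A. s i * (E / F) + ((r i)^2/F - (p i)^2 / F))"
    by (intro sum.cong refl) (simp add: diff_divide_distrib)
  also have "\<dots> = (\<Sum>i\<in>A. s i) * (E / F) + ((\<Sum>i\<in>A. (r i)^2)/F - (\<Sum>i\<in>A. (p i)^2)/F)"
    by (simp only: sum.distrib sum_subtractf sum_distrib_right[symmetric] sum_divide_distrib[symmetric])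
  finally show ?thesis by (simp add: diff_divide_distrib)
qed

lemma alg3: "(s::real) \<noteq> 0 \<Longrightarrow> F \<noteq> 0 \<Longrightarrow> (E + X / s) * (s / F) = s * E / F + X / F"
  by (simp add: field_simps)

lemma step_norm:
  assumes "row i M \<noteq> 0"
  shows "norm (rk_step M bt x i - xs)^2 = norm (x - xs)^2
           + ((bt$i - row i M \<bullet> xs)^2 - (row i M \<bullet> (x - xs))^2) / norm (row i M)^2"
proof -
  define a where "a = row i M"
  define e where "e = x - xs"
  define r where "r = bt$i - a \<bullet> xs"
  define p where "p = a \<bullet> e"
  define s where "s = a \<bullet> a"
  have s0: "s \<noteq> 0" using assms unfolding s_def a_def by simp
  have eq: "rk_step M bt x i - xs = e - ((p - r) / s) *\<^sub>R a"
    unfolding rk_step_def a_def[symmetric] e_def p_def r_def s_def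
    by (simp add: power2_norm_eq_inner inner_diff_right algebra_simps)
  have "norm (e - ((p - r) / s) *\<^sub>R a)^2 = e \<bullet> e - 2 * ((p - r) / s) * p + ((p - r)/s)^2 * s"
    unfolding p_def s_def norm_sub_scale ..
  then have "norm (rk_step M bt x i - xs)^2 = e \<bullet> e - 2 * ((p - r) / s) * p + ((p - r)/s)^2 * s"
    by (simp only: eq)
  also have "\<dots> = e \<bullet> e + (r^2 - p^2) / s"
    using s0 by (rule alg1)
  finally show ?thesis
    unfolding a_def[symmetric] e_def[symmetric] by (simp add: r_def p_def s_def power2_norm_eq_inner)
qed

lemma step_expect:
  assumes rnz: "\<And>i. row i M \<noteq> 0"
  shows "measure_pmf.expectation (row_pmf M) (\<lambda>i. norm (rk_step M bt x i - xs)^2)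
     = norm (x - xs)^2 + (norm (bt - M *v xs)^2 - norm (M *v (x - xs))^2) / (frob_norm M)^2"
proof -
  define F where "F = (frob_norm M)^2"
  have F0: "F > 0" using frob_pos[OF rnz] F_def by simp
  define s where "s i = norm (row i M)^2" for i
  define r where "r i = bt$i - row i M \<bullet> xs" for i
  define p where "p i = row i M \<bullet> (x - xs)" for i
  have s0: "s i \<noteq> 0" for i using rnz unfolding s_def by simp
  have "measure_pmf.expectation (row_pmf M) (\<lambda>i. norm (rk_step M bt x i - xs)^2)
      = (\<Sum>i\<in>UNIV. norm (rk_step M bt x i - xs)^2 * pmf (row_pmf M) i)"
    by (rule integral_measure_pmf_real) auto
  also have "\<dots> = (\<Sum>i\<in>UNIV. s i * norm (x - xs)^2 / F + (r i^2 - p i^2) / F)"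
  proof (rule sum.cong[OF refl])
    fix i
    have h1: "norm (rk_step M bt x i - xs)^2 = norm (x - xs)^2 + (r i^2 - p i^2) / s i"
      unfolding r_def p_def s_def by (rule step_norm[OF rnz])
    have h2: "pmf (row_pmf M) i = s i / F"
      unfolding s_def F_def by (rule pmf_row[OF rnz])
    show "norm (rk_step M bt x i - xs)^2 * pmf (row_pmf M) i = s i * norm (x - xs)^2 / F + (r i^2 - p i^2) / F"
      unfolding h1 h2 using s0[of i] F0 by (intro alg3) auto
  qed
  also have "\<dots> = (\<Sum>i\<in>UNIV. s i) * norm (x - xs)^2 / F + ((\<Sum>i\<in>UNIV. r i^2) - (\<Sum>i\<in>UNIV. p i^2)) / F"
    by (rule sum_alg)
  also have "(\<Sum>i\<in>UNIV. s i) = F" unfolding s_def F_def frob2 ..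
  also have "(\<Sum>i\<in>UNIV. r i^2) = norm (bt - M *v xs)^2" unfolding r_def by (simp add: vnorm2 mv_comp)
  also have "(\<Sum>i\<in>UNIV. p i^2) = norm (M *v (x - xs))^2" unfolding p_def by (simp add: vnorm2 mv_comp)
  finally have eq: "measure_pmf.expectation (row_pmf M) (\<lambda>i. norm (rk_step M bt x i - xs)^2)
     = F * norm (x - xs)^2 / F + (norm (bt - M *v xs)^2 - norm (M *v (x - xs))^2) / F" .
  have "F * norm (x - xs)^2 / F = norm (x - xs)^2" using F0 by simp
  then show ?thesis unfolding F_def[symmetric] using eq by linarith
qed

lemma integral_bind_pmf_fin:
  fixes f :: "'b \<Rightarrow> real"
  assumes fM: "finite (set_pmf M)" and fN: "\<And>x. x \<in> set_pmf M \<Longrightarrow> finite (set_pmf (N x))"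
    and nn: "\<And>y. 0 \<le> f y"
  shows "measure_pmf.expectation (bind_pmf M N) f = measure_pmf.expectation M (\<lambda>x. measure_pmf.expectation (N x) f)"
proof -
  have fB: "finite (set_pmf (bind_pmf M N))" using fM fN by simp
  have "ennreal (measure_pmf.expectation (bind_pmf M N) f) = (\<integral>\<^sup>+y. ennreal (f y) \<partial>bind_pmf M N)"
    by (rule nn_integral_eq_integral[symmetric]) (auto intro: integrable_measure_pmf_finite[OF fB] nn)
  also have "\<dots> = (\<integral>\<^sup>+x. \<integral>\<^sup>+y. ennreal (f y) \<partial>N x \<partial>M)" by simp
  also have "\<dots> = (\<integral>\<^sup>+x. ennreal (measure_pmf.expectation (N x) f) \<partial>M)"
    by (intro nn_integral_cong_AE AE_pmfI nn_integral_eq_integral integrable_measure_pmf_finite fN)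
       (auto intro: nn)
  also have "\<dots> = ennreal (measure_pmf.expectation M (\<lambda>x. measure_pmf.expectation (N x) f))"
    by (intro nn_integral_eq_integral integrable_measure_pmf_finite fM AE_pmfI integral_nonneg_AE AE_I2 nn)
  finally show ?thesis
    by (subst (asm) ennreal_inj) (auto intro!: integral_nonneg_AE AE_I2 nn)
qed

lemma rk_iter_finite: "finite (set_pmf (rk_iter M bt x0 k))"
  by (induction k) auto

lemma rowsp_row: "row i M \<in> rowsp M"
proof -
  have "transpose M *v axis i 1 = row i M"
    by (simp add: vec_eq_iff matrix_vector_mul_component inner_axis transpose_def row_def)
  then show ?thesis unfolding rowsp_def by (metis rangeI)
qed

lemma rk_iter_rowsp:
  assumes "x0 - xs \<in> rowsp M" "x \<in> set_pmf (rk_iter M bt x0 k)"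
  shows "x - xs \<in> rowsp M"
  using assms(2)
proof (induction k arbitrary: x)
  case 0 then show ?case using assms(1) by simp
next
  case (Suc k)
  then obtain y i where y: "y \<in> set_pmf (rk_iter M bt x0 k)" "x = rk_step M bt y i" by auto
  have "x - xs = (y - xs) - ((row i M \<bullet> y - bt $ i) / (norm (row i M))^2) *\<^sub>R row i M"
    using y(2) by (simp add: rk_step_def algebra_simps)
  also have "\<dots> \<in> rowsp M"
    by (intro subspace_diff[OF subspace_rowsp] subspace_scale[OF subspace_rowsp] Suc.IH y(1) rowsp_row)
  finally show ?case .
qed

lemma sym_AtA: "((transpose M ** M) *v x) \<bullet> y = x \<bullet> ((transpose M ** M) *v (y::real^'n))"
  for M :: "real^'n^'m"
proof -
  have "((transpose M ** M) *v x) \<bullet> y = y \<bullet> (transpose M *v (M *v x))"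
    by (simp add: matrix_vector_mul_assoc[symmetric] inner_commute)
  also have "\<dots> = (M *v y) \<bullet> (M *v x)" by (rule mv_inner_transpose[symmetric])
  also have "\<dots> = (M *v x) \<bullet> (M *v y)" by (rule inner_commute)
  also have "\<dots> = x \<bullet> (transpose M *v (M *v y))" by (rule mv_inner_transpose)
  also have "\<dots> = x \<bullet> ((transpose M ** M) *v y)" by (simp add: matrix_vector_mul_assoc[symmetric])
  finally show ?thesis .
qed

lemma sigma_min_eq:
  fixes M :: "real^'n^'m"
  assumes eV: "e \<in> rowsp M" and ne: "norm e = 1" and mu: "\<mu> = norm (M *v e)^2" and mupos: "0 < \<mu>"
    and ineq: "\<And>v. v \<in> rowsp M \<Longrightarrow> \<mu> * norm v ^2 \<le> norm (M *v v)^2"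
    and eig: "transpose M *v (M *v e) = \<mu> *\<^sub>R e"
  shows "(sigma_min M)^2 = \<mu>"
proof -
  let ?S = "transpose M ** M"
  let ?L = "{l. l \<noteq> 0 \<and> (\<exists>v. v \<noteq> 0 \<and> ?S *v v = l *s v)}"
  have fin: "finite ?L"
    by (rule finite_subset[OF _ eig_finite[OF sym_AtA[of M]]]) blast
  have mem: "\<mu> \<in> ?L"
  proof -
    have "e \<noteq> 0" using ne by auto
    moreover have "?S *v e = \<mu> *s e"
      using eig by (simp add: matrix_vector_mul_assoc[symmetric] scalar_mult_eq_scaleR)
    ultimately show ?thesis using mupos by auto
  qed
  have low: "\<mu> \<le> l" if lL: "l \<in> ?L" for l
  proof -
    obtain v where l0: "l \<noteq> 0" and v: "v \<noteq> 0" "?S *v v = l *s v" using lL by blast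
    have Sv: "transpose M *v (M *v v) = l *\<^sub>R v"
      using v(2) by (simp add: matrix_vector_mul_assoc[symmetric] scalar_mult_eq_scaleR)
    have "v = (1/l) *\<^sub>R (transpose M *v (M *v v))" using Sv l0 by simp
    also have "\<dots> \<in> rowsp M" by (intro subspace_scale[OF subspace_rowsp]) (auto simp: rowsp_def)
    finally have vV: "v \<in> rowsp M" .
    have "l * norm v ^2 = v \<bullet> (transpose M *v (M *v v))"
      unfolding Sv by (simp add: power2_norm_eq_inner)
    also have "\<dots> = (M *v v) \<bullet> (M *v v)" by (rule mv_inner_transpose[symmetric])
    also have "\<dots> = norm (M *v v)^2" by (simp add: power2_norm_eq_inner)
    finally have "\<mu> * norm v ^2 \<le> l * norm v ^2" using ineq[OF vV] by simp
    moreover have "0 < norm v ^2" using v(1) by simp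
    ultimately show ?thesis by simp
  qed
  have "Min ?L = \<mu>" by (rule Min_eqI[OF fin low mem])
  then show ?thesis unfolding sigma_min_def using mupos by simp
qed

lemma spec_bound:
  fixes M :: "real^'n^'m"
  assumes eV: "e \<in> rowsp M" and ne: "norm e = 1" and mu: "\<mu> = norm (M *v e)^2"
  shows "1 \<le> (spec_norm (pinv M))^2 * \<mu>"
proof -
  have "norm (pinv M *v (M *v e)) \<le> onorm (\<lambda>x. pinv M *v x) * norm (M *v e)"
    by (rule onorm[OF matrix_vector_mul_bounded_linear])
  then have "1 \<le> spec_norm (pinv M) * norm (M *v e)"
    using pinv_rowsp[OF eV] ne unfolding spec_norm_def by simp
  then have "1^2 \<le> (spec_norm (pinv M) * norm (M *v e))^2"
    by (rule power_mono) simp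
  then show ?thesis unfolding mu by (simp add: power_mult_distrib)
qed

lemma alg5: "(\<mu>::real) \<noteq> 0 \<Longrightarrow> (1 - \<mu>/F) * (X + R/\<mu>) + R/F = (1 - \<mu>/F) * X + R/\<mu>"
  by (simp add: field_simps)

lemma main_rk:
  fixes At :: "real^'n^'m" and bt :: "real^'m"
  assumes rnz: "\<And>i. row i At \<noteq> 0"
    and start: "x0 - xLS \<in> rowsp At"
  shows "measure_pmf.expectation (rk_iter At bt x0 k) (\<lambda>x. (norm (x - xLS))^2)
            \<le> (1 - 1 / ((spec_norm (pinv At))^2 * (frob_norm At)^2)) ^ k * (norm (x0 - xLS))^2
               + (norm (bt - At *v xLS))^2 / (sigma_min At)^2"
proof -
  define F where "F = (frob_norm At)^2"
  have F0: "0 < F" unfolding F_def by (rule frob_pos[OF rnz])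
  have At0: "At \<noteq> 0"
  proof
    assume "At = 0"
    then have "row undefined At = 0" by (simp add: row_def vec_eq_iff)
    with rnz show False by blast
  qed
  obtain e \<mu> where eV: "e \<in> rowsp At" and ne: "norm e = 1" and mu: "\<mu> = norm (At *v e)^2"
    and mupos: "0 < \<mu>" and ineq: "\<And>v. v \<in> rowsp At \<Longrightarrow> \<mu> * norm v ^2 \<le> norm (At *v v)^2"
    and eig: "transpose At *v (At *v e) = \<mu> *\<^sub>R e"
    using spectral_min[OF At0] by metis
  have sig: "(sigma_min At)^2 = \<mu>" by (rule sigma_min_eq[OF eV ne mu mupos ineq eig])
  have sp: "1 \<le> (spec_norm (pinv At))^2 * \<mu>" by (rule spec_bound[OF eV ne mu])
  define q where "q = 1 - \<mu> / F"
  have muF: "\<mu> \<le> F" using mv_norm_le[of At e] ne unfolding mu F_def by simp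
  have q0: "0 \<le> q" unfolding q_def using muF F0 by simp
  define R where "R = norm (bt - At *v xLS)^2"
  define D where "D k = measure_pmf.expectation (rk_iter At bt x0 k) (\<lambda>x. (norm (x - xLS))^2)" for k
  have step: "measure_pmf.expectation (row_pmf At) (\<lambda>i. norm (rk_step At bt x i - xLS)^2)
              \<le> q * norm (x - xLS)^2 + R / F" if xV: "x - xLS \<in> rowsp At" for x
  proof -
    have "\<mu> * norm (x - xLS)^2 \<le> norm (At *v (x - xLS))^2" by (rule ineq[OF xV])
    then have "(R - norm (At *v (x - xLS))^2) / F \<le> (R - \<mu> * norm (x - xLS)^2) / F"
      using F0 by (intro divide_right_mono) auto
    then show ?thesis unfolding step_expect[OF rnz] R_def[symmetric] F_def[symmetric] q_def
      using F0 by (simp add: field_simps)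
  qed
  have D: "D k \<le> q ^ k * norm (x0 - xLS)^2 + R / \<mu>" for k
  proof (induction k)
    case 0
    have "0 \<le> R / \<mu>" using mupos unfolding R_def by simp
    then show ?case unfolding D_def by simp
  next
    case (Suc k)
    have "D (Suc k) = measure_pmf.expectation (rk_iter At bt x0 k)
            (\<lambda>x. measure_pmf.expectation (map_pmf (rk_step At bt x) (row_pmf At)) (\<lambda>y. norm (y - xLS)^2))"
      unfolding D_def rk_iter.simps
      by (rule integral_bind_pmf_fin[OF rk_iter_finite]) auto
    also have "\<dots> = measure_pmf.expectation (rk_iter At bt x0 k)
            (\<lambda>x. measure_pmf.expectation (row_pmf At) (\<lambda>i. norm (rk_step At bt x i - xLS)^2))"
      by simp
    also have "\<dots> \<le> measure_pmf.expectation (rk_iter At bt x0 k) (\<lambda>x. q * norm (x - xLS)^2 + R / F)"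
      by (intro integral_mono_AE integrable_measure_pmf_finite rk_iter_finite AE_pmfI step
                rk_iter_rowsp[OF start])
    also have "\<dots> = measure_pmf.expectation (rk_iter At bt x0 k) (\<lambda>x. q * norm (x - xLS)^2)
                     + measure_pmf.expectation (rk_iter At bt x0 k) (\<lambda>x. R / F)"
      by (rule Bochner_Integration.integral_add) (rule integrable_measure_pmf_finite[OF rk_iter_finite])+
    also have "\<dots> = q * D k + R / F"
      unfolding D_def by simp
    also have "\<dots> \<le> q * (q ^ k * norm (x0 - xLS)^2 + R / \<mu>) + R / F"
      using Suc.IH q0 by (intro add_right_mono mult_left_mono) auto
    also have "\<dots> = q ^ Suc k * norm (x0 - xLS)^2 + R / \<mu>"
      unfolding q_def using alg5[of \<mu> F "q ^ k * norm (x0 - xLS)^2" R] mupos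
      by (simp add: q_def[symmetric] mult.assoc)
    finally show ?case .
  qed
  define Rt where "Rt = (spec_norm (pinv At))^2 * (frob_norm At)^2"
  have qle: "q \<le> 1 - 1 / Rt"
  proof -
    define s2 where "s2 = (spec_norm (pinv At))^2"
    have s2pos: "0 < s2" using sp mupos unfolding s2_def
      by (metis mult_eq_0_iff not_one_le_zero order_le_less zero_le_power2)
    have "1 / s2 \<le> \<mu>" using sp s2pos unfolding s2_def[symmetric] by (simp add: field_simps)
    then have "1 / s2 / F \<le> \<mu> / F" using F0 by (intro divide_right_mono) auto
    then show ?thesis unfolding q_def Rt_def s2_def[symmetric] F_def[symmetric] by simp
  qed
  have "D k \<le> (1 - 1 / Rt) ^ k * norm (x0 - xLS)^2 + R / (sigma_min At)^2"
  proof -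
    have "q ^ k \<le> (1 - 1 / Rt) ^ k" by (rule power_mono[OF qle q0])
    then have "q ^ k * norm (x0 - xLS)^2 \<le> (1 - 1 / Rt) ^ k * norm (x0 - xLS)^2"
      by (rule mult_right_mono) simp
    then show ?thesis using D[of k] unfolding sig by linarith
  qed
  then show ?thesis unfolding D_def Rt_def R_def .
qed

lemma matrix_add_rdistrib': "((B::real^'n^'m) + C) ** (A::real^'k^'n) = B ** A + C ** A"
  by (simp add: matrix_matrix_mult_def vec_eq_iff sum.distrib algebra_simps)

theorem corollary3p4:
  fixes A :: "real^'n^'m" and E :: "real^'m^'m" and F :: "real^'n^'n"
    and b \<epsilon> :: "real^'m" and x0 :: "real^'n" and k :: nat
  assumes invE: "invertible (mat 1 + E)"
    and invF: "invertible (mat 1 + F)"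
    and rows_nz: "\<And>i. row i ((mat 1 + E) ** A ** (mat 1 + F)) \<noteq> 0"
    and consistent: "\<exists>x. A *v x = b"
    and start: "x0 - pinv A *v b \<in> range (\<lambda>y. transpose ((mat 1 + E) ** A ** (mat 1 + F)) *v y)"
  shows "let At = (mat 1 + E) ** A ** (mat 1 + F);
             bt = b + \<epsilon>;
             dA = E ** A + A ** F + E ** A ** F;
             xLS = pinv A *v b;
             Rt = (spec_norm (pinv At))^2 * (frob_norm At)^2
         in measure_pmf.expectation (rk_iter At bt x0 k) (\<lambda>x. (norm (x - xLS))^2)
            \<le> (1 - 1 / Rt) ^ k * (norm (x0 - xLS))^2
               + (norm (dA *v xLS - \<epsilon>))^2 / (sigma_min At)^2"
proof -
  define At where "At = (mat 1 + E) ** A ** (mat 1 + F)"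
  define dA where "dA = E ** A + A ** F + E ** A ** F"
  define xLS where "xLS = pinv A *v b"
  have AtE: "At = A + dA"
    unfolding At_def dA_def
    by (simp add: matrix_add_ldistrib matrix_add_rdistrib' matrix_mul_assoc)
  obtain x where bx: "A *v x = b" using consistent by blast
  have Ax: "A *v xLS = b" unfolding xLS_def using pinv_consistent[of A x] bx by simp
  have "b + \<epsilon> - At *v xLS = - (dA *v xLS - \<epsilon>)"
    unfolding AtE by (simp add: matrix_vector_mult_add_rdistrib Ax)
  then have nr: "norm (b + \<epsilon> - At *v xLS) = norm (dA *v xLS - \<epsilon>)" by (simp only: norm_minus_cancel)
  have st: "x0 - xLS \<in> rowsp At" using start unfolding rowsp_def At_def xLS_def .
  have "measure_pmf.expectation (rk_iter At (b + \<epsilon>) x0 k) (\<lambda>x. (norm (x - xLS))^2)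
            \<le> (1 - 1 / ((spec_norm (pinv At))^2 * (frob_norm At)^2)) ^ k * (norm (x0 - xLS))^2
               + (norm (b + \<epsilon> - At *v xLS))^2 / (sigma_min At)^2"
    by (rule main_rk[OF rows_nz[folded At_def] st])
  then show ?thesis unfolding Let_def At_def[symmetric] dA_def[symmetric] xLS_def[symmetric] nr .
qed

end
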